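(* The saturation of a finite sample set is finite.
   Context: Fix a countably infinite set of term variables $x,y,z,\dots$ and a countably infinite set of time variables $\kappa,\kappa',\dots$. Basic terms are given by the grammar $t,u::= x\mid tu\mid t^{o}\mid t^{\ell}\mid t^{r}\mid \mathrm{id}\mid\bot$ (purely syntactic). Samples are given by the grammar $\alpha::=\kappa\mid t[\alpha]\mid \mathsf{s}(\alpha)\mid\mathsf{p}(\alpha)\mid\mathsf{last}(t)$, where $\kappa$ ranges over time variables and $t$ over basic terms. Let $\leadsto$ be the relation on samples given by, for all basic terms $t,u$ and samples $\alpha$: $t[\alpha]\leadsto\alpha$; $\mathsf{s}(\alpha)\leadsto\alpha$; $\mathsf{p}(\alpha)\leadsto\alpha$; $(tu)[\alpha]\leadsto t[u[\alpha]]$; $t^{o}[\alpha]\leadsto t[\alpha]$; $t^{r}[\alpha]\leadsto t[t^{r}[\alpha]]$ and $t^{r}[\alpha]\leadsto t[\mathsf{s}(t^{r}[\alpha])]$; $t^{\ell}[\alpha]\leadsto t[t^{\ell}[\alpha]]$ and $t^{\ell}[\alpha]\leadsto t[\mathsf{p}(t^{\ell}[\alpha])]$; $t[\alpha]\leadsto t[\mathsf{last}(t)]$. The saturation of a set $\Delta$ of samples is $\{\beta\mid\exists\alpha\in\Delta,\ \alpha\leadsto^{*}\beta\}$, where $\leadsto^{*}$ is the reflexive transitive closure of $\leadsto$. *)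

theory Defs
  imports Main
begin

datatype bterm =
    Var nat
  | App bterm bterm
  | Op bterm
  | Lft bterm
  | Rgt bterm
  | Id
  | Bot

datatype sample =
    TVar nat
  | Sub bterm sample
  | S sample
  | P sample
  | Last bterm

inductive step :: "sample \<Rightarrow> sample \<Rightarrow> bool" where
  sub_drop: "step (Sub t a) a"
| s_drop: "step (S a) a"
| p_drop: "step (P a) a"
| app: "step (Sub (App t u) a) (Sub t (Sub u a))"
| op: "step (Sub (Op t) a) (Sub t a)"
| rgt1: "step (Sub (Rgt t) a) (Sub t (Sub (Rgt t) a))"
| rgt2: "step (Sub (Rgt t) a) (Sub t (S (Sub (Rgt t) a)))"
| lft1: "step (Sub (Lft t) a) (Sub t (Sub (Lft t) a))"
| lft2: "step (Sub (Lft t) a) (Sub t (P (Sub (Lft t) a)))"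
| last: "step (Sub t a) (Sub t (Last t))"

definition saturation :: "sample set \<Rightarrow> sample set" where
  "saturation D = {b. \<exists>a\<in>D. step\<^sup>*\<^sup>* a b}"

end

theory Submission
  imports Defs
begin

primrec G0 :: "bterm \<Rightarrow> sample \<Rightarrow> sample set" where
  "G0 (Var n) x = {Sub (Var n) x}"
| "G0 Id x = {Sub Id x}"
| "G0 Bot x = {Sub Bot x}"
| "G0 (Op t) x = insert (Sub (Op t) x) (G0 t x \<union> G0 t (Last t) \<union> {Last t})"
| "G0 (App t u) x = insert (Sub (App t u) x)
     ((G0 u x \<union> G0 u (Last u) \<union> {Last u}) \<union>
      (\<Union>y\<in>(G0 u x \<union> G0 u (Last u) \<union> {Last u}). G0 t y \<union> G0 t (Last t) \<union> {Last t}))"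
| "G0 (Rgt t) x = {Sub (Rgt t) x, S (Sub (Rgt t) x)} \<union>
     (\<Union>y\<in>{Sub (Rgt t) x, S (Sub (Rgt t) x)}. G0 t y \<union> G0 t (Last t) \<union> {Last t})"
| "G0 (Lft t) x = {Sub (Lft t) x, P (Sub (Lft t) x)} \<union>
     (\<Union>y\<in>{Sub (Lft t) x, P (Sub (Lft t) x)}. G0 t y \<union> G0 t (Last t) \<union> {Last t})"

definition G :: "bterm \<Rightarrow> sample \<Rightarrow> sample set" where
  "G t x = G0 t x \<union> G0 t (Last t) \<union> {Last t}"

lemma fin_G0: "finite (G0 t x)"
  by (induction t arbitrary: x) auto

lemma fin_G: "finite (G t x)"
  by (simp add: G_def fin_G0)

lemma start_G0: "Sub t x \<in> G0 t x"
  by (cases t) auto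

lemma G0_simps2:
  "G0 (Op t) x = insert (Sub (Op t) x) (G t x)"
  "G0 (App t u) x = insert (Sub (App t u) x) (G u x \<union> (\<Union>y\<in>G u x. G t y))"
  "G0 (Rgt t) x = {Sub (Rgt t) x, S (Sub (Rgt t) x)} \<union> G t (Sub (Rgt t) x) \<union> G t (S (Sub (Rgt t) x))"
  "G0 (Lft t) x = {Sub (Lft t) x, P (Sub (Lft t) x)} \<union> G t (Sub (Lft t) x) \<union> G t (P (Sub (Lft t) x))"
  by (auto simp: G_def)

declare G0.simps(4-7)[simp del]

lemma start_G: "Sub t x \<in> G t x"
  by (simp add: G_def start_G0)

lemma lastT_G: "Sub T (Last T) \<in> G T x"
  by (simp add: G_def start_G0)

lemma G_Last_sub: "G T (Last T) \<subseteq> G T x"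
  by (auto simp: G_def)

lemma step_base: "step (Sub t a) c \<Longrightarrow> t \<in> {Var n, Id, Bot} \<Longrightarrow> c = a \<or> c = Sub t (Last t)"
  by (auto elim: step.cases)
lemma step_Op: "step (Sub (Op t) a) c \<Longrightarrow> c = a \<or> c = Sub (Op t) (Last (Op t)) \<or> c = Sub t a"
  by (auto elim: step.cases)
lemma step_App: "step (Sub (App t u) a) c \<Longrightarrow> c = a \<or> c = Sub (App t u) (Last (App t u)) \<or> c = Sub t (Sub u a)"
  by (auto elim: step.cases)
lemma step_Rgt: "step (Sub (Rgt t) a) c \<Longrightarrow> c = a \<or> c = Sub (Rgt t) (Last (Rgt t)) \<or> c = Sub t (Sub (Rgt t) a) \<or> c = Sub t (S (Sub (Rgt t) a))"
  by (auto elim: step.cases)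
lemma step_Lft: "step (Sub (Lft t) a) c \<Longrightarrow> c = a \<or> c = Sub (Lft t) (Last (Lft t)) \<or> c = Sub t (Sub (Lft t) a) \<or> c = Sub t (P (Sub (Lft t) a))"
  by (auto elim: step.cases)
lemma step_S: "step (S a) c \<Longrightarrow> c = a"
  by (auto elim: step.cases)
lemma step_P: "step (P a) c \<Longrightarrow> c = a"
  by (auto elim: step.cases)
lemma step_Last: "step (Last t) c \<Longrightarrow> False"
  by (auto elim: step.cases)

lemma G0_to_G:
  assumes "\<And>x b c. b \<in> G0 T x \<Longrightarrow> step b c \<Longrightarrow> c \<in> G T x \<or> c = x"
    and "b \<in> G T x" and "step b c"
  shows "c \<in> G T x \<or> c = x"
proof -
  have "b \<in> G0 T x \<or> b \<in> G0 T (Last T) \<or> b = Last T" using assms(2) by (auto simp: G_def)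
  then show ?thesis
  proof (elim disjE)
    assume "b \<in> G0 T x" then show ?thesis using assms(1,3) by blast
  next
    assume "b \<in> G0 T (Last T)"
    then have "c \<in> G T (Last T) \<or> c = Last T" using assms(1,3) by blast
    then show ?thesis using G_Last_sub[of T x] by (auto simp: G_def)
  next
    assume "b = Last T" then show ?thesis using assms(3) step_Last by blast
  qed
qed

lemma G_step: "b \<in> G t x \<Longrightarrow> step b c \<Longrightarrow> c \<in> G t x \<or> c = x"
proof (induction t arbitrary: x b c)
  case (Var n) show ?case
    by (rule G0_to_G[OF _ Var.prems]) (auto simp: G_def elim!: step.cases)
next
  case Id show ?case
    by (rule G0_to_G[OF _ Id.prems]) (auto simp: G_def elim!: step.cases)
next
  case Bot show ?case
    by (rule G0_to_G[OF _ Bot.prems]) (auto simp: G_def elim!: step.cases)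
next
  case (Op t)
  show ?case
  proof (rule G0_to_G[OF _ Op.prems])
    fix x b c assume b: "b \<in> G0 (Op t) x" and st: "step b c"
    show "c \<in> G (Op t) x \<or> c = x"
    proof (cases "b = Sub (Op t) x")
      case True
      then show ?thesis using st step_Op[of t x c] lastT_G[of "Op t" x] start_G[of t x]
        by (auto simp: G_def G0_simps2)
    next
      case False
      then have "b \<in> G t x" using b by (simp add: G0_simps2)
      then have "c \<in> G t x \<or> c = x" using Op.IH st by blast
      then show ?thesis by (auto simp: G_def G0_simps2)
    qed
  qed
next
  case (App t u)
  show ?case
  proof (rule G0_to_G[OF _ App.prems])
    fix x b c assume b: "b \<in> G0 (App t u) x" and st: "step b c"
    have sub: "G0 (App t u) x \<subseteq> G (App t u) x" by (auto simp: G_def)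
    show "c \<in> G (App t u) x \<or> c = x"
    proof (cases "b = Sub (App t u) x")
      case True
      have "Sub t (Sub u x) \<in> G0 (App t u) x" using start_G[of u x] start_G[of t "Sub u x"]
        by (auto simp: G0_simps2)
      then show ?thesis using True st step_App[of t u x c] lastT_G[of "App t u" x] sub
        by auto
    next
      case False
      then have "b \<in> G u x \<or> (\<exists>y\<in>G u x. b \<in> G t y)" using b by (simp add: G0_simps2)
      then show ?thesis
      proof
        assume "b \<in> G u x"
        then have "c \<in> G u x \<or> c = x" using App.IH(2) st by blast
        then show ?thesis using sub by (auto simp: G0_simps2)
      next
        assume "\<exists>y\<in>G u x. b \<in> G t y"
        then obtain y where y: "y \<in> G u x" "b \<in> G t y" by blast
        then have "c \<in> G t y \<or> c = y" using App.IH(1) st by blast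
        then show ?thesis using sub y(1) by (auto simp: G0_simps2)
      qed
    qed
  qed
next
  case (Rgt t)
  show ?case
  proof (rule G0_to_G[OF _ Rgt.prems])
    fix x b c assume b: "b \<in> G0 (Rgt t) x" and st: "step b c"
    have sub: "G0 (Rgt t) x \<subseteq> G (Rgt t) x" by (auto simp: G_def)
    let ?A = "Sub (Rgt t) x"
    have "b = ?A \<or> b = S ?A \<or> b \<in> G t ?A \<or> b \<in> G t (S ?A)" using b by (simp add: G0_simps2)
    then show "c \<in> G (Rgt t) x \<or> c = x"
    proof (elim disjE)
      assume "b = ?A"
      then show ?thesis using st step_Rgt[of t x c] lastT_G[of "Rgt t" x] sub
        start_G[of t ?A] start_G[of t "S ?A"] by (auto simp: G0_simps2)
    next
      assume "b = S ?A" then show ?thesis using st step_S sub by (auto simp: G0_simps2)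
    next
      assume "b \<in> G t ?A"
      then have "c \<in> G t ?A \<or> c = ?A" using Rgt.IH st by blast
      then show ?thesis using sub by (auto simp: G0_simps2)
    next
      assume "b \<in> G t (S ?A)"
      then have "c \<in> G t (S ?A) \<or> c = S ?A" using Rgt.IH st by blast
      then show ?thesis using sub by (auto simp: G0_simps2)
    qed
  qed
next
  case (Lft t)
  show ?case
  proof (rule G0_to_G[OF _ Lft.prems])
    fix x b c assume b: "b \<in> G0 (Lft t) x" and st: "step b c"
    have sub: "G0 (Lft t) x \<subseteq> G (Lft t) x" by (auto simp: G_def)
    let ?A = "Sub (Lft t) x"
    have "b = ?A \<or> b = P ?A \<or> b \<in> G t ?A \<or> b \<in> G t (P ?A)" using b by (simp add: G0_simps2)
    then show "c \<in> G (Lft t) x \<or> c = x"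
    proof (elim disjE)
      assume "b = ?A"
      then show ?thesis using st step_Lft[of t x c] lastT_G[of "Lft t" x] sub
        start_G[of t ?A] start_G[of t "P ?A"] by (auto simp: G0_simps2)
    next
      assume "b = P ?A" then show ?thesis using st step_P sub by (auto simp: G0_simps2)
    next
      assume "b \<in> G t ?A"
      then have "c \<in> G t ?A \<or> c = ?A" using Lft.IH st by blast
      then show ?thesis using sub by (auto simp: G0_simps2)
    next
      assume "b \<in> G t (P ?A)"
      then have "c \<in> G t (P ?A) \<or> c = P ?A" using Lft.IH st by blast
      then show ?thesis using sub by (auto simp: G0_simps2)
    qed
  qed
qed

definition reach :: "sample \<Rightarrow> sample set" where
  "reach a = {b. step\<^sup>*\<^sup>* a b}"

lemma closed_sub:
  assumes "a \<in> W" and "\<And>b c. b \<in> W \<Longrightarrow> step b c \<Longrightarrow> c \<in> W"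
  shows "reach a \<subseteq> W"
proof
  fix b assume "b \<in> reach a"
  then have "step\<^sup>*\<^sup>* a b" by (simp add: reach_def)
  then show "b \<in> W" by induction (use assms in auto)
qed

lemma reach_closed: "b \<in> reach a \<Longrightarrow> step b c \<Longrightarrow> c \<in> reach a"
  by (auto simp: reach_def)

lemma fin_reach: "finite (reach a)"
proof (induction a)
  case (TVar n)
  have "reach (TVar n) \<subseteq> {TVar n}" by (rule closed_sub) (auto elim: step.cases)
  then show ?case using finite_subset by blast
next
  case (Sub t a)
  have "reach (Sub t a) \<subseteq> G t a \<union> reach a"
  proof (rule closed_sub)
    show "Sub t a \<in> G t a \<union> reach a" using start_G by blast
  next
    fix b c assume "b \<in> G t a \<union> reach a" "step b c"
    then show "c \<in> G t a \<union> reach a"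
      using G_step[of b t a c] reach_closed[of b a c] by (auto simp: reach_def)
  qed
  then show ?case using Sub.IH fin_G finite_subset by blast
next
  case (S a)
  have "reach (S a) \<subseteq> insert (S a) (reach a)"
  proof (rule closed_sub)
    fix b c assume "b \<in> insert (S a) (reach a)" "step b c"
    then show "c \<in> insert (S a) (reach a)"
      using step_S[of a c] reach_closed[of b a c] by (auto simp: reach_def)
  qed (simp)
  then show ?case using S.IH finite_subset by blast
next
  case (P a)
  have "reach (P a) \<subseteq> insert (P a) (reach a)"
  proof (rule closed_sub)
    fix b c assume "b \<in> insert (P a) (reach a)" "step b c"
    then show "c \<in> insert (P a) (reach a)"
      using step_P[of a c] reach_closed[of b a c] by (auto simp: reach_def)
  qed (simp)
  then show ?case using P.IH finite_subset by blast
next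
  case (Last t)
  have "reach (Last t) \<subseteq> {Last t}" by (rule closed_sub) (auto elim: step.cases)
  then show ?case using finite_subset by blast
qed

theorem lemma3p5:
  assumes "finite D"
  shows "finite (saturation D)"
proof -
  have "saturation D = (\<Union>a\<in>D. reach a)" by (auto simp: saturation_def reach_def)
  then show ?thesis using assms fin_reach by simp
qed

end
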